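(* Let $W,S,A$ be finite sets, let $\beta\in\Delta_{W,S}$ be a Markov kernel $\beta(s|w)$, and let $f_\beta\colon\Delta_{S,A}\to\Delta_{W,A}$ be the linear map $\pi(a|s)\mapsto\sum_s\beta(s|w)\pi(a|s)$. Let $U=\{s\in S\colon|\operatorname{supp}(\beta(s|\cdot))|>1\}$ be the set of sensor states that can be obtained from several world states. Then the set $G=f_\beta(\Delta_{S,A})$ can be written as $G=\bigcup_{\theta\in\Theta}G_\theta$ for some index set $\Theta$, where each $G_\theta$ is a Cartesian product of convex sets, $G_\theta=\prod_{w\in W}G_{\theta,w}$ with each $G_{\theta,w}\subseteq\Delta_A$ convex, and each vertex of $G_\theta$ lies in a face of $G$ of dimension at most $|U|(|A|-1)$.
   Context: $\Delta_X$ is the probability simplex on a finite set $X$; $\Delta_{X,Y}=\prod_{x\in X}\Delta_Y$ is the polytope of Markov kernels $p(y|x)$ from $X$ to $Y$. $\operatorname{supp}(\beta(s|\cdot))=\{w\in W\colon\beta(s|w)>0\}$. $G$ is a polytope (image of a polytope under a linear map). *)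

theory Defs
  imports "HOL-Analysis.Analysis"
begin

definition prob_simplex :: "(real^'a::finite) set" where
  "prob_simplex = {p. (\<forall>a. 0 \<le> p$a) \<and> (\<Sum>a\<in>UNIV. p$a) = 1}"

text \<open>Markov kernels from 'x to 'y: k$x is a distribution on 'y (k$x$y = k(y|x)).\<close>
definition markov_kernels :: "(real^'y::finite^'x::finite) set" where
  "markov_kernels = {k. \<forall>x. k$x \<in> prob_simplex}"

definition f_beta :: "real^'s::finite^'w::finite \<Rightarrow> real^'a::finite^'s \<Rightarrow> real^'a^'w" where
  "f_beta \<beta> \<pi> = (\<chi> w. \<chi> a. \<Sum>s\<in>UNIV. \<beta>$w$s * \<pi>$s$a)"

definition supp_col :: "real^'s::finite^'w::finite \<Rightarrow> 's \<Rightarrow> 'w set" where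
  "supp_col \<beta> s = {w. \<beta>$w$s > 0}"

end

theory Submission
  imports Defs
begin


lemma mk_iff: "k \<in> markov_kernels \<longleftrightarrow> (\<forall>x y. 0 \<le> k$x$y) \<and> (\<forall>x. (\<Sum>y\<in>UNIV. k$x$y) = 1)"
  unfolding markov_kernels_def prob_simplex_def by auto

lemma fb_add: "f_beta \<beta> (x + y) = f_beta \<beta> x + f_beta \<beta> y"
  by (simp add: f_beta_def vec_eq_iff distrib_left sum.distrib)
lemma fb_scale: "f_beta \<beta> (c *\<^sub>R x) = c *\<^sub>R f_beta \<beta> x"
  by (simp add: f_beta_def vec_eq_iff sum_distrib_left ac_simps)
lemma fb_linear: "linear (f_beta \<beta>)"
  by (rule linearI) (simp_all add: fb_add fb_scale)
lemma fb_comp: "f_beta \<beta> x $ w $ a = (\<Sum>s\<in>UNIV. \<beta>$w$s * x$s$a)"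
  by (simp add: f_beta_def)

lemma mk_convex: "convex (markov_kernels :: (real^'b::finite^'c::finite) set)"
proof (unfold convex_def, intro ballI allI impI)
  fix x y :: "real^'b^'c" and u v :: real
  assume "x \<in> markov_kernels" "y \<in> markov_kernels" "0 \<le> u" "0 \<le> v" "u + v = 1"
  then show "u *\<^sub>R x + v *\<^sub>R y \<in> markov_kernels"
  proof -
    have "\<forall>a b. 0 \<le> (u *\<^sub>R x + v *\<^sub>R y)$a$b"
      using \<open>x \<in> markov_kernels\<close> \<open>y \<in> markov_kernels\<close> \<open>0 \<le> u\<close> \<open>0 \<le> v\<close> by (simp add: mk_iff)
    moreover have "(\<Sum>b\<in>UNIV. (u *\<^sub>R x + v *\<^sub>R y)$a$b) = 1" for a
    proof -
      have "(\<Sum>b\<in>UNIV. (u *\<^sub>R x + v *\<^sub>R y)$a$b) = u * (\<Sum>b\<in>UNIV. x$a$b) + v * (\<Sum>b\<in>UNIV. y$a$b)"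
        by (simp add: sum.distrib sum_distrib_left)
      also have "\<dots> = 1" using \<open>x \<in> markov_kernels\<close> \<open>y \<in> markov_kernels\<close> \<open>u + v = 1\<close> by (simp add: mk_iff)
      finally show ?thesis .
    qed
    ultimately show ?thesis by (simp add: mk_iff)
  qed
qed

lemma mk_polytope: "polytope (markov_kernels :: (real^'b::finite^'c::finite) set)"
proof -
  let ?A = "(\<lambda>p. {k::real^'b^'c. (axis (fst p) (axis (snd p) 1)) \<bullet> k \<ge> 0}) ` UNIV"
  let ?B = "(\<lambda>x. {k::real^'b^'c. (axis x (\<chi> y. 1)) \<bullet> k = 1}) ` UNIV"
  have in1: "(axis x (axis y 1)) \<bullet> k = k$x$y" for x y and k :: "real^'b^'c"
    by (simp add: inner_axis' inner_axis)
  have in2: "(axis x (\<chi> y. 1)) \<bullet> k = (\<Sum>y\<in>UNIV. k$x$y)" for x and k :: "real^'b^'c"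
    by (simp only: inner_axis') (simp add: inner_vec_def)
  have eq: "markov_kernels = \<Inter>?A \<inter> \<Inter>?B"
    by (auto simp: mk_iff in1 in2)
  have "polyhedron (\<Inter>?A \<inter> \<Inter>?B)"
    by (intro polyhedron_Int polyhedron_Inter) (auto intro: polyhedron_halfspace_ge polyhedron_hyperplane)
  moreover have "bounded (markov_kernels :: (real^'b::finite^'c::finite) set)"
  proof (unfold bounded_iff, intro exI ballI)
    fix k :: "real^'b^'c" assume k: "k \<in> markov_kernels"
    have "norm k \<le> (\<Sum>x\<in>UNIV. norm (k$x))" unfolding norm_vec_def by (rule L2_set_le_sum) simp
    also have "\<dots> \<le> (\<Sum>x\<in>(UNIV::'c set). 1)"
    proof (rule sum_mono)
      fix x
      have "norm (k$x) \<le> (\<Sum>y\<in>UNIV. \<bar>k$x$y\<bar>)" by (rule norm_le_l1_cart)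
      also have "\<dots> = 1" using k by (simp add: mk_iff)
      finally show "norm (k$x) \<le> 1" .
    qed
    finally show "norm k \<le> real CARD('c)" by simp
  qed
  ultimately show ?thesis using eq by (simp add: polytope_eq_bounded_polyhedron)
qed

lemma fb_mk: "\<beta> \<in> markov_kernels \<Longrightarrow> \<pi> \<in> markov_kernels \<Longrightarrow> f_beta \<beta> \<pi> \<in> markov_kernels"
proof -
  assume b: "\<beta> \<in> markov_kernels" and p: "\<pi> \<in> markov_kernels"
  have "(\<Sum>a\<in>UNIV. \<Sum>s\<in>UNIV. \<beta>$w$s * \<pi>$s$a) = 1" for w
  proof -
    have "(\<Sum>a\<in>UNIV. \<Sum>s\<in>UNIV. \<beta>$w$s * \<pi>$s$a) = (\<Sum>s\<in>UNIV. \<beta>$w$s * (\<Sum>a\<in>UNIV. \<pi>$s$a))"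
      by (subst sum.swap) (simp add: sum_distrib_left)
    also have "\<dots> = 1" using b p by (simp add: mk_iff)
    finally show ?thesis .
  qed
  with b p show ?thesis by (auto simp: mk_iff fb_comp intro!: sum_nonneg)
qed



definition Emat :: "'s::finite \<Rightarrow> 'a::finite \<Rightarrow> real^'a^'s" where
  "Emat s a = (\<chi> s' a'. if s' = s \<and> a' = a then 1 else 0)"

lemma fbE: "f_beta \<beta> (Emat s a) $ w $ a' = \<beta>$w$s * (if a = a' then 1 else 0)"
proof -
  have "f_beta \<beta> (Emat s a) $ w $ a' = (\<Sum>s'\<in>UNIV. if s' = s then \<beta>$w$s' * (if a = a' then 1 else 0) else 0)"
    unfolding fb_comp Emat_def by (intro sum.cong) auto
  also have "\<dots> = \<beta>$w$s * (if a = a' then 1 else 0)" by (simp add: sum.delta)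
  finally show ?thesis .
qed

lemma col_zero:
  assumes b: "\<beta> \<in> markov_kernels" and c: "\<not> card (supp_col \<beta> s) > 1" "card (supp_col \<beta> s) \<noteq> 1"
  shows "\<beta>$w$s = 0"
proof -
  have "card (supp_col \<beta> s) = 0" using c by linarith
  hence "supp_col \<beta> s = {}" by simp
  hence "\<not> \<beta>$w$s > 0" by (auto simp: supp_col_def)
  with b show ?thesis by (metis mk_iff order_antisym_conv not_less)
qed

lemma spanX:
  fixes \<beta> :: "real^'s::finite^'w::finite" and \<delta> :: "real^'a::finite^'s"
  assumes b: "\<beta> \<in> markov_kernels" and rs: "\<forall>s. (\<Sum>a\<in>UNIV. \<delta>$s$a) = 0"
    and z: "\<forall>s. card (supp_col \<beta> s) = 1 \<longrightarrow> \<delta>$s = 0"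
  shows "f_beta \<beta> \<delta> \<in> span ((\<lambda>(s,a). f_beta \<beta> (Emat s a) - f_beta \<beta> (Emat s a0)) `
            ({s. card (supp_col \<beta> s) > 1} \<times> (UNIV - {a0})))" (is "_ \<in> span ?B")
proof -
  let ?U = "{s. card (supp_col \<beta> s) > 1}"
  define g where "g s a = f_beta \<beta> (Emat s a) - f_beta \<beta> (Emat s a0)" for s a
  have eq: "f_beta \<beta> \<delta> = (\<Sum>s\<in>?U. \<Sum>a\<in>UNIV. \<delta>$s$a *\<^sub>R g s a)"
  proof (subst vec_eq_iff, intro allI, subst vec_eq_iff, intro allI)
    fix w a'
    have "(\<Sum>s\<in>?U. \<Sum>a\<in>UNIV. \<delta>$s$a *\<^sub>R g s a) $ w $ a'
        = (\<Sum>s\<in>?U. \<Sum>a\<in>UNIV. \<delta>$s$a * (\<beta>$w$s * (if a = a' then 1 else 0) - \<beta>$w$s * (if a0 = a' then 1 else 0)))"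
      by (simp add: g_def fbE)
    also have "\<dots> = (\<Sum>s\<in>?U. \<beta>$w$s * \<delta>$s$a')"
    proof (rule sum.cong[OF refl])
      fix s
      have "(\<Sum>a\<in>UNIV. \<delta>$s$a * (\<beta>$w$s * (if a = a' then 1 else 0) - \<beta>$w$s * (if a0 = a' then 1 else 0)))
         = (\<Sum>a\<in>UNIV. (if a = a' then \<beta>$w$s * \<delta>$s$a else 0)) - \<beta>$w$s * (if a0 = a' then 1 else 0) * (\<Sum>a\<in>UNIV. \<delta>$s$a)"
      proof -
        have "(\<Sum>a\<in>UNIV. \<delta>$s$a * (\<beta>$w$s * (if a = a' then 1 else 0) - \<beta>$w$s * (if a0 = a' then 1 else 0)))
          = (\<Sum>a\<in>UNIV. (if a = a' then \<beta>$w$s * \<delta>$s$a else 0) - \<beta>$w$s * (if a0 = a' then 1 else 0) * \<delta>$s$a)"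
          by (intro sum.cong) (auto simp: algebra_simps)
        also have "\<dots> = (\<Sum>a\<in>UNIV. (if a = a' then \<beta>$w$s * \<delta>$s$a else 0)) - \<beta>$w$s * (if a0 = a' then 1 else 0) * (\<Sum>a\<in>UNIV. \<delta>$s$a)"
          by (simp only: sum_subtractf sum_distrib_left)
        finally show ?thesis .
      qed
      also have "\<dots> = \<beta>$w$s * \<delta>$s$a'" using rs by (simp add: sum.delta')
      finally show "(\<Sum>a\<in>UNIV. \<delta>$s$a * (\<beta>$w$s * (if a = a' then 1 else 0) - \<beta>$w$s * (if a0 = a' then 1 else 0)))
         = \<beta>$w$s * \<delta>$s$a'" .
    qed
    also have "\<dots> = (\<Sum>s\<in>UNIV. \<beta>$w$s * \<delta>$s$a')"
    proof (rule sum.mono_neutral_left)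
      show "\<forall>i\<in>UNIV - ?U. \<beta>$w$i * \<delta>$i$a' = 0"
      proof
        fix s assume "s \<in> UNIV - ?U"
        then show "\<beta>$w$s * \<delta>$s$a' = 0"
          using col_zero[OF b, of s w] z by (cases "card (supp_col \<beta> s) = 1") auto
      qed
    qed auto
    finally show "f_beta \<beta> \<delta> $ w $ a' = (\<Sum>s\<in>?U. \<Sum>a\<in>UNIV. \<delta>$s$a *\<^sub>R g s a) $ w $ a'"
      by (simp add: fb_comp)
  qed
  have "(\<Sum>s\<in>?U. \<Sum>a\<in>UNIV. \<delta>$s$a *\<^sub>R g s a) \<in> span ?B"
  proof (intro span_sum span_mul)
    fix s a assume s: "s \<in> ?U"
    show "g s a \<in> span ?B"
    proof (cases "a = a0")
      case True then show ?thesis by (simp add: g_def span_zero)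
    next
      case False
      then have "g s a \<in> ?B" using s by (auto simp: g_def)
      then show ?thesis by (rule span_base)
    qed
  qed
  with eq show ?thesis by simp
qed

lemma cardB:
  "card ((\<lambda>(s,a). F s a) ` ({s. P s} \<times> (UNIV - {a0::'a::finite})) :: 'b set) \<le> card {s::'s::finite. P s} * (CARD('a) - 1)"
proof -
  have "card ((\<lambda>(s,a). F s a) ` ({s. P s} \<times> (UNIV - {a0}))) \<le> card ({s. P s} \<times> (UNIV - {a0}))"
    by (rule card_image_le) simp
  also have "\<dots> = card {s. P s} * (CARD('a) - 1)" by (simp add: card_cartesian_product card_Diff_singleton)
  finally show ?thesis .
qed



definition pt :: "real^'a::finite^'w::finite \<Rightarrow> 'w \<Rightarrow> real^'a \<Rightarrow> real \<Rightarrow> real^'a^'w" where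
  "pt p w d t = (\<chi> w'. if w' = w then p$w + t *\<^sub>R d else p$w')"

definition bad :: "(real^'a::finite^'w::finite) set \<Rightarrow> real^'a^'w \<Rightarrow> bool" where
  "bad G p \<longleftrightarrow> (\<exists>w d. d \<noteq> 0 \<and> (\<forall>t. \<bar>t\<bar> < 1 \<longrightarrow> pt p w d t \<in> G))"

lemma good_det:
  fixes \<beta> :: "real^'s::finite^'w::finite" and \<nu> :: "real^'a::finite^'s"
  assumes b: "\<beta> \<in> markov_kernels" and nb: "\<not> bad (f_beta \<beta> ` markov_kernels) p"
    and nu: "\<nu> \<in> markov_kernels" and fnu: "f_beta \<beta> \<nu> = p" and c1: "card (supp_col \<beta> s) = 1"
  shows "\<exists>a. \<forall>c. c \<noteq> a \<longrightarrow> \<nu>$s$c = 0"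
proof (rule ccontr)
  assume na: "\<not> ?thesis"
  obtain w where sw: "supp_col \<beta> s = {w}" using c1 card_1_singleton_iff by (metis One_nat_def)
  have bw: "\<beta>$w$s > 0" using sw by (auto simp: supp_col_def)
  have bw': "\<beta>$w'$s = 0" if "w' \<noteq> w" for w'
  proof -
    have "\<not> \<beta>$w'$s > 0" using sw that by (auto simp: supp_col_def)
    with b show ?thesis by (metis mk_iff order_antisym_conv not_less)
  qed
  have nn: "0 \<le> \<nu>$s$c" for c using nu by (simp add: mk_iff)
  have s1: "(\<Sum>c\<in>UNIV. \<nu>$s$c) = 1" using nu by (simp add: mk_iff)
  obtain a where a: "\<nu>$s$a > 0"
  proof (rule ccontr)
    assume "\<not> thesis"
    hence "\<forall>c. \<nu>$s$c \<le> 0" using that by (meson not_less)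
    hence "(\<Sum>c\<in>UNIV. \<nu>$s$c) \<le> 0" by (simp add: sum_nonpos)
    with s1 show False by simp
  qed
  obtain b' where b': "b' \<noteq> a" "\<nu>$s$b' \<noteq> 0" using na by blast
  have b'p: "\<nu>$s$b' > 0" using b' nn[of b'] by simp
  define \<epsilon> where "\<epsilon> = min (\<nu>$s$a) (\<nu>$s$b')"
  have ep: "\<epsilon> > 0" using a b'p by (simp add: \<epsilon>_def)
  define d :: "real^'a" where "d = (\<chi> c. \<beta>$w$s * \<epsilon> * ((if c = a then 1 else 0) - (if c = b' then 1 else 0)))"
  have "d \<noteq> 0"
  proof
    assume "d = 0"
    hence "d$a = 0" by simp
    thus False using b' bw ep by (simp add: d_def)
  qed
  moreover have "pt p w d t \<in> f_beta \<beta> ` markov_kernels" if t: "\<bar>t\<bar> < 1" for t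
  proof
    define D :: "real^'a^'s" where "D = (\<chi> s' c. if s' = s then t * \<epsilon> * ((if c = a then 1 else 0) - (if c = b' then 1 else 0)) else 0)"
    have te: "\<bar>t * \<epsilon>\<bar> \<le> \<epsilon>" using t ep by (simp add: abs_mult)
    have "\<nu> + D \<in> markov_kernels"
      unfolding mk_iff
    proof (intro conjI allI)
      fix x y
      show "0 \<le> (\<nu> + D)$x$y"
        using nn[of y] nu te \<epsilon>_def b'(1) by (auto simp: D_def mk_iff abs_le_iff)
    next
      fix x
      show "(\<Sum>y\<in>UNIV. (\<nu> + D)$x$y) = 1"
      proof (cases "x = s")
        case True
        have "(\<Sum>y\<in>UNIV. (\<nu> + D)$x$y) = (\<Sum>y\<in>UNIV. \<nu>$s$y) + (\<Sum>y\<in>UNIV. t * \<epsilon> * ((if y = a then 1 else 0) - (if y = b' then 1 else 0)))"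
          using True by (simp add: D_def sum.distrib)
        also have "\<dots> = 1" using s1 by (simp add: sum_distrib_left[symmetric] sum_subtractf)
        finally show ?thesis .
      next
        case False then show ?thesis using nu by (simp add: D_def mk_iff)
      qed
    qed
    moreover have "pt p w d t = f_beta \<beta> (\<nu> + D)"
    proof (subst vec_eq_iff, intro allI, subst vec_eq_iff, intro allI)
      fix w' c
      have "f_beta \<beta> (\<nu> + D) $ w' $ c = p$w'$c + (\<Sum>s'\<in>UNIV. \<beta>$w'$s' * D$s'$c)"
        using fnu by (simp add: fb_add fb_comp)
      also have "(\<Sum>s'\<in>UNIV. \<beta>$w'$s' * D$s'$c) = \<beta>$w'$s * (t * \<epsilon> * ((if c = a then 1 else 0) - (if c = b' then 1 else 0)))"
        by (simp add: D_def if_distrib sum.delta' cong: if_cong)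
      finally show "pt p w d t $ w' $ c = f_beta \<beta> (\<nu> + D) $ w' $ c"
        using bw'[of w'] by (auto simp: pt_def d_def)
    qed
    ultimately show "pt p w d t = f_beta \<beta> (\<nu> + D)" "\<nu> + D \<in> markov_kernels" by auto
  qed
  ultimately have "bad (f_beta \<beta> ` markov_kernels) p" unfolding bad_def by blast
  with nb show False by simp
qed



lemma good_face:
  fixes \<beta> :: "real^'s::finite^'w::finite"
  assumes b: "\<beta> \<in> markov_kernels"
    and pG: "p \<in> (f_beta \<beta> :: real^'a::finite^'s \<Rightarrow> real^'a^'w) ` markov_kernels"
    and nb: "\<not> bad ((f_beta \<beta> :: real^'a::finite^'s \<Rightarrow> real^'a^'w) ` markov_kernels) p"
  shows "\<exists>F. F face_of ((f_beta \<beta> :: real^'a::finite^'s \<Rightarrow> real^'a^'w) ` markov_kernels) \<and> p \<in> F \<and>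
            aff_dim F \<le> int (card {s. card (supp_col \<beta> s) > 1}) * (int CARD('a) - 1)"
proof -
  define G where "G = (f_beta \<beta> :: real^'a::finite^'s \<Rightarrow> real^'a^'w) ` markov_kernels"
  have polyG: "polytope G" unfolding G_def by (rule polytope_linear_image[OF fb_linear mk_polytope])
  have cG: "convex G" by (rule polytope_imp_convex[OF polyG])
  let ?P = "\<lambda>F. F face_of G \<and> p \<in> F"
  have "?P G" using cG pG by (simp add: face_of_refl G_def)
  then obtain F where F: "?P F" and Fmin: "\<And>F'. ?P F' \<Longrightarrow> nat (aff_dim F + 1) \<le> nat (aff_dim F' + 1)"
    using ex_has_least_nat[of ?P G "\<lambda>F. nat (aff_dim F + 1)"] by blast
  have FG: "F \<subseteq> G" using F face_of_imp_subset by blast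
  have cF: "convex F" using F face_of_imp_convex by blast
  have pri: "p \<in> rel_interior F"
  proof (rule ccontr)
    assume np: "p \<notin> rel_interior F"
    have "polyhedron F" using F polyG face_of_polytope_polytope polytope_imp_polyhedron by blast
    moreover have "p \<in> rel_frontier F" using np F closure_subset by (auto simp: rel_frontier_def)
    ultimately obtain E where E: "E face_of F" "E \<noteq> F" "p \<in> E"
      using rel_frontier_of_polyhedron_alt by blast
    have "?P E" using E F face_of_trans by blast
    hence "nat (aff_dim F + 1) \<le> nat (aff_dim E + 1)" by (rule Fmin)
    moreover have "aff_dim E < aff_dim F" using face_of_aff_dim_lt[OF cF E(1) E(2)] .
    moreover have "aff_dim E \<ge> -1" by (rule aff_dim_geq)
    ultimately show False by linarith
  qed
  then obtain e where e: "e > 0" "ball p e \<inter> affine hull F \<subseteq> F"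
    by (auto simp: mem_rel_interior_ball)
  obtain a0 :: 'a where True by simp
  let ?U = "{s. card (supp_col \<beta> s) > 1}"
  let ?B = "(\<lambda>(s,a). f_beta \<beta> (Emat s a) - f_beta \<beta> (Emat s a0) :: real^'a^'w) ` (?U \<times> (UNIV - {a0}))"
  have sub: "(\<lambda>x. x - p) ` F \<subseteq> span ?B"
  proof
    fix x assume "x \<in> (\<lambda>x. x - p) ` F"
    then obtain q where q: "q \<in> F" "x = q - p" by blast
    show "x \<in> span ?B"
    proof (cases "q = p")
      case True then show ?thesis using q by (simp add: span_zero)
    next
      case False
      define t where "t = e / (2 * norm (q - p))"
      have nq: "norm (q - p) > 0" using False by simp
      have t0: "t > 0" using e nq by (simp add: t_def)
      define r where "r = p + t *\<^sub>R (p - q)"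
      have "dist p r = e / 2" using nq e
        by (simp add: r_def t_def dist_norm norm_minus_commute)
      hence "r \<in> ball p e" using e by simp
      moreover have "r \<in> affine hull F"
      proof -
        have "(1 + t) *\<^sub>R p + (- t) *\<^sub>R q \<in> affine hull F"
          by (rule mem_affine[OF affine_affine_hull]) (use F q in \<open>auto intro: hull_inc\<close>)
        moreover have "(1 + t) *\<^sub>R p + (- t) *\<^sub>R q = r" by (simp add: r_def algebra_simps)
        ultimately show ?thesis by simp
      qed
      ultimately have "r \<in> F" using e by blast
      hence "r \<in> G" using FG by blast
      then obtain \<tau> where tau: "\<tau> \<in> markov_kernels" "r = f_beta \<beta> \<tau>" by (auto simp: G_def)
      have "q \<in> G" using FG q by blast
      then obtain \<sigma> where sig: "\<sigma> \<in> markov_kernels" "q = f_beta \<beta> \<sigma>" by (auto simp: G_def)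
      define \<nu> where "\<nu> = (1 / (1 + t)) *\<^sub>R \<tau> + (t / (1 + t)) *\<^sub>R \<sigma>"
      have nuK: "\<nu> \<in> markov_kernels"
        using mk_convex tau sig t0 unfolding \<nu>_def convex_def
        by (metis (no_types, lifting) add_divide_distrib divide_nonneg_nonneg divide_self_if less_eq_real_def
            zero_le_one add_pos_pos zero_less_one not_less_iff_gr_or_eq)
      have fnu: "f_beta \<beta> \<nu> = p"
      proof -
        have "f_beta \<beta> \<nu> = (1 / (1 + t)) *\<^sub>R r + (t / (1 + t)) *\<^sub>R q"
          using tau sig by (simp add: \<nu>_def fb_add fb_scale)
        also have "\<dots> = (1 / (1 + t)) *\<^sub>R ((1 + t) *\<^sub>R p)"
          by (simp add: r_def algebra_simps scaleR_add_right[symmetric] del: scaleR_add_right)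
        also have "\<dots> = p" using t0 by simp
        finally show ?thesis .
      qed
      define \<delta> where "\<delta> = \<sigma> - \<nu>"
      have rs: "\<forall>s. (\<Sum>a\<in>UNIV. \<delta>$s$a) = 0"
        using sig nuK by (simp add: \<delta>_def sum_subtractf mk_iff)
      have z: "\<forall>s. card (supp_col \<beta> s) = 1 \<longrightarrow> \<delta>$s = 0"
      proof (intro allI impI)
        fix s assume c1: "card (supp_col \<beta> s) = 1"
        obtain a where a: "\<forall>c. c \<noteq> a \<longrightarrow> \<nu>$s$c = 0"
          using good_det[OF b nb[folded G_def, unfolded G_def] nuK fnu c1] by blast
        have sc: "\<sigma>$s$c = 0" if "c \<noteq> a" for c
        proof -
          have "(1 / (1 + t)) * \<tau>$s$c + (t / (1 + t)) * \<sigma>$s$c = 0"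
            using a that by (simp add: \<nu>_def)
          moreover have "0 \<le> \<tau>$s$c" "0 \<le> \<sigma>$s$c" using tau sig by (simp_all add: mk_iff)
          moreover have "0 < 1 / (1 + t)" "0 < t / (1 + t)" using t0 by simp_all
          ultimately show ?thesis
            by (smt (verit) mult_nonneg_nonneg mult_pos_pos)
        qed
        have dc: "\<delta>$s$c = 0" if "c \<noteq> a" for c using sc[OF that] a that by (simp add: \<delta>_def)
        have "(\<Sum>c\<in>UNIV. \<delta>$s$c) = \<delta>$s$a + (\<Sum>c\<in>UNIV - {a}. \<delta>$s$c)"
          by (simp add: sum.remove)
        also have "(\<Sum>c\<in>UNIV - {a}. \<delta>$s$c) = 0" using dc by (intro sum.neutral) auto
        finally have "\<delta>$s$a = 0" using rs by simp
        with dc show "\<delta>$s = 0" by (metis vec_eq_iff zero_index)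
      qed
      have "f_beta \<beta> \<delta> = q - p"
        using sig fnu by (simp add: \<delta>_def linear_diff[OF fb_linear])
      with spanX[OF b rs z, of a0] show ?thesis using q by simp
    qed
  qed
  have "aff_dim F = int (dim ((\<lambda>x. x - p) ` F))"
    by (rule aff_dim_eq_dim_subtract) (use F in \<open>auto intro: hull_inc\<close>)
  also have "dim ((\<lambda>x. x - p) ` F) \<le> card ?B" by (rule dim_le_card[OF sub]) simp
  also have "card ?B \<le> card ?U * (CARD('a) - 1)" by (rule cardB)
  finally have "aff_dim F \<le> int (card ?U * (CARD('a) - 1))" by linarith
  also have "\<dots> = int (card ?U) * (int CARD('a) - 1)"
    by (simp add: of_nat_diff Suc_leI)
  finally show ?thesis using F by (auto simp: G_def)
qed



lemma seg_convex: "convex ((\<lambda>t. x + t *\<^sub>R (d::'v::real_vector)) ` {-1<..<1::real})"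
proof -
  have "(\<lambda>t. x + t *\<^sub>R d) ` {-1<..<1::real} = (+) x ` ((\<lambda>t. t *\<^sub>R d) ` {-1<..<1})"
    by (simp add: image_image)
  moreover have "convex ((\<lambda>t. t *\<^sub>R d) ` {-1<..<1::real})"
    by (rule convex_linear_image) (auto intro: bounded_linear.linear bounded_linear_scaleR_left)
  ultimately show ?thesis by (simp add: convex_translation)
qed

lemma prodset_bad:
  "{q. \<forall>w'. q$w' \<in> (if w' = w then (\<lambda>t. p$w' + t *\<^sub>R d) ` {-1<..<1} else {p$w'})}
     = (\<lambda>t. pt p w d t) ` {-1<..<1}"
proof
  show "{q. \<forall>w'. q$w' \<in> (if w' = w then (\<lambda>t. p$w' + t *\<^sub>R d) ` {-1<..<1} else {p$w'})}
     \<subseteq> (\<lambda>t. pt p w d t) ` {-1<..<1}"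
  proof
    fix q assume "q \<in> {q. \<forall>w'. q$w' \<in> (if w' = w then (\<lambda>t. p$w' + t *\<^sub>R d) ` {-1<..<1} else {p$w'})}"
    hence h: "\<forall>w'. q$w' \<in> (if w' = w then (\<lambda>t. p$w' + t *\<^sub>R d) ` {-1<..<1} else {p$w'})" by simp
    from h[rule_format, of w] obtain t where t: "t \<in> {-1<..<1}" "q$w = p$w + t *\<^sub>R d" by auto
    have "q = pt p w d t"
    proof (subst vec_eq_iff, intro allI)
      fix w' show "q$w' = pt p w d t $ w'"
        using h[rule_format, of w'] t by (cases "w' = w") (auto simp: pt_def)
    qed
    with t show "q \<in> (\<lambda>t. pt p w d t) ` {-1<..<1}" by blast
  qed
next
  show "(\<lambda>t. pt p w d t) ` {-1<..<1} \<subseteq>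
    {q. \<forall>w'. q$w' \<in> (if w' = w then (\<lambda>t. p$w' + t *\<^sub>R d) ` {-1<..<1} else {p$w'})}"
    by (auto simp: pt_def)
qed

lemma pt_midpoint: "midpoint (pt p w d (t - e)) (pt p w d (t + e)) = pt p w d t"
  by (simp add: vec_eq_iff midpoint_def pt_def field_simps)

lemma pt_inj: "d \<noteq> 0 \<Longrightarrow> pt p w d s = pt p w d t \<Longrightarrow> s = t"
proof -
  assume d: "d \<noteq> 0" and eq: "pt p w d s = pt p w d t"
  hence "pt p w d s $ w = pt p w d t $ w" by simp
  hence "s *\<^sub>R d = t *\<^sub>R d" by (simp add: pt_def)
  with d show "s = t" by simp
qed

lemma no_extreme:
  assumes d: "d \<noteq> 0"
  shows "\<not> v extreme_point_of ((\<lambda>t. pt p w d t) ` {-1<..<1})"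
proof
  assume ve: "v extreme_point_of ((\<lambda>t. pt p w d t) ` {-1<..<1})"
  then obtain t where t: "t \<in> {-1<..<1}" "v = pt p w d t" by (auto simp: extreme_point_of_def)
  define e where "e = (1 - \<bar>t\<bar>) / 2"
  have e: "e > 0" using t by (auto simp: e_def)
  have r1: "t - e \<in> {-1<..<1}" "t + e \<in> {-1<..<1}" using t unfolding e_def
    by (auto simp: abs_if field_simps)
  have in1: "pt p w d (t - e) \<in> (\<lambda>t. pt p w d t) ` {-1<..<1}"
    using r1 by (intro imageI) auto
  have in2: "pt p w d (t + e) \<in> (\<lambda>t. pt p w d t) ` {-1<..<1}"
    using r1 by (intro imageI) auto
  have ne: "pt p w d (t - e) \<noteq> pt p w d (t + e)"
    using pt_inj[OF d, of p w "t - e" "t + e"] e by auto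
  have "v \<in> open_segment (pt p w d (t - e)) (pt p w d (t + e))"
    using midpoint_in_open_segment[of "pt p w d (t - e)" "pt p w d (t + e)"] ne t(2) pt_midpoint by metis
  with ve in1 in2 show False by (auto simp: extreme_point_of_def)
qed

theorem proposition5:
  fixes \<beta> :: "real^'s::finite^'w::finite"
  assumes "\<beta> \<in> markov_kernels"
  defines "U \<equiv> {s. card (supp_col \<beta> s) > 1}"
  defines "G \<equiv> (f_beta \<beta> :: real^'a::finite^'s \<Rightarrow> real^'a^'w) ` markov_kernels"
  shows "\<exists>\<Theta> :: (real^'a^'w) set set.
           \<Union>\<Theta> = G \<and>
           (\<forall>C\<in>\<Theta>. \<exists>Gw :: 'w \<Rightarrow> (real^'a) set.
               (\<forall>w. convex (Gw w) \<and> Gw w \<subseteq> prob_simplex) \<and>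
               C = {p. \<forall>w. p$w \<in> Gw w}) \<and>
           (\<forall>C\<in>\<Theta>. \<forall>v. v extreme_point_of C \<longrightarrow>
               (\<exists>F. F face_of G \<and> v \<in> F \<and>
                    aff_dim F \<le> int (card U) * (int CARD('a) - 1)))"
proof -
  note b = assms(1)
  have GK: "G \<subseteq> markov_kernels" using fb_mk[OF b] by (auto simp: G_def)
  define wd where "wd p = (SOME wd. snd wd \<noteq> 0 \<and> (\<forall>t. \<bar>t\<bar> < 1 \<longrightarrow> pt p (fst wd) (snd wd) t \<in> G))" for p
  have wdP: "snd (wd p) \<noteq> 0 \<and> (\<forall>t. \<bar>t\<bar> < 1 \<longrightarrow> pt p (fst (wd p)) (snd (wd p)) t \<in> G)" if "bad G p" for p
  proof -
    have "\<exists>wd. snd wd \<noteq> 0 \<and> (\<forall>t. \<bar>t\<bar> < 1 \<longrightarrow> pt p (fst wd) (snd wd) t \<in> G)"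
      using that by (auto simp: bad_def)
    then show ?thesis unfolding wd_def by (rule someI_ex)
  qed
  define Gwf where "Gwf p = (if bad G p then (\<lambda>w'. if w' = fst (wd p) then (\<lambda>t. p$w' + t *\<^sub>R snd (wd p)) ` {-1<..<1} else {p$w'})
                            else (\<lambda>w'. {p$w'}))" for p
  define Cs where "Cs p = {q. \<forall>w. q$w \<in> Gwf p w}" for p
  have Cs_bad: "Cs p = (\<lambda>t. pt p (fst (wd p)) (snd (wd p)) t) ` {-1<..<1}" if "bad G p" for p
    unfolding Cs_def Gwf_def if_P[OF that] by (rule prodset_bad)
  have Cs_good: "Cs p = {p}" if "\<not> bad G p" for p
    using that by (auto simp: Cs_def Gwf_def vec_eq_iff)
  have CsG: "Cs p \<subseteq> G" if "p \<in> G" for p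
  proof (cases "bad G p")
    case True then show ?thesis using wdP[OF True] by (auto simp: Cs_bad)
  next
    case False then show ?thesis using that by (simp add: Cs_good)
  qed
  have pCs: "p \<in> Cs p" for p
  proof (cases "bad G p")
    case True
    have "pt p (fst (wd p)) (snd (wd p)) 0 = p" by (simp add: pt_def vec_eq_iff)
    hence "p \<in> (\<lambda>t. pt p (fst (wd p)) (snd (wd p)) t) ` {-1<..<1}"
      by (metis greaterThanLessThan_iff image_eqI neg_less_0_iff_less zero_less_one)
    then show ?thesis using Cs_bad[OF True] by simp
  next
    case False then show ?thesis by (simp add: Cs_good)
  qed
  show ?thesis
  proof (intro exI[of _ "Cs ` G"] conjI ballI allI impI)
    show "\<Union> (Cs ` G) = G" using CsG pCs by blast
  next
    fix C assume "C \<in> Cs ` G"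
    then obtain p where p: "p \<in> G" "C = Cs p" by blast
    show "\<exists>Gw :: 'w \<Rightarrow> (real^'a) set. (\<forall>w. convex (Gw w) \<and> Gw w \<subseteq> prob_simplex) \<and> C = {p. \<forall>w. p$w \<in> Gw w}"
    proof (intro exI[of _ "Gwf p"] conjI allI)
      show "C = {q. \<forall>w. q$w \<in> Gwf p w}" using p by (simp add: Cs_def)
    next
      fix w show "convex (Gwf p w)" by (simp add: Gwf_def seg_convex)
    next
      fix w show "Gwf p w \<subseteq> prob_simplex"
      proof
        fix x assume x: "x \<in> Gwf p w"
        have "\<exists>q\<in>Cs p. q$w = x"
        proof (cases "bad G p")
          case True
          show ?thesis
          proof (cases "w = fst (wd p)")
            case True2: True
            then obtain t where t: "t \<in> {-1<..<1}" "x = p$w + t *\<^sub>R snd (wd p)"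
              using x True by (auto simp: Gwf_def)
            show ?thesis using t True True2
              by (intro bexI[of _ "pt p (fst (wd p)) (snd (wd p)) t"]) (auto simp: Cs_bad pt_def)
          next
            case False
            then show ?thesis using x True pCs[of p] by (intro bexI[of _ p]) (auto simp: Gwf_def)
          qed
        next
          case False
          then show ?thesis using x pCs[of p] by (intro bexI[of _ p]) (auto simp: Gwf_def)
        qed
        then obtain q where "q \<in> Cs p" "q$w = x" by blast
        hence "q \<in> markov_kernels" using CsG[OF p(1)] GK by blast
        then show "x \<in> prob_simplex" using \<open>q$w = x\<close> by (auto simp: markov_kernels_def)
      qed
    qed
  next
    fix C v assume C: "C \<in> Cs ` G" and v: "v extreme_point_of C"
    then obtain p where p: "p \<in> G" "C = Cs p" by blast
    show "\<exists>F. F face_of G \<and> v \<in> F \<and> aff_dim F \<le> int (card U) * (int CARD('a) - 1)"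
    proof (cases "bad G p")
      case True
      then show ?thesis using v p no_extreme[of "snd (wd p)" v p "fst (wd p)"] wdP[OF True]
        by (simp add: Cs_bad)
    next
      case False
      hence "v = p" using v p Cs_good by (auto simp: extreme_point_of_def)
      then show ?thesis using good_face[OF b, of p] p(1) False by (simp add: G_def U_def)
    qed
  qed
qed

end
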